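(* Let $(X,d,f)$ be a dynamical system with $f$ uniformly continuous, let $(\hat X,\hat d)$ be the completion of $(X,d)$ and $\hat f$ the (uniformly continuous) extension of $f$ to $\hat X$. If $(X,d,f)$ has the shadowing property, then so does $(\hat X,\hat d,\hat f)$; and if $(X,d,f)$ has the finite shadowing property, then so does $(\hat X,\hat d,\hat f)$.
   Context: A dynamical system $(X,d,f)$ is a separable metric space with continuous $f:X\to X$. A $\delta$-pseudo-orbit is a finite or infinite sequence $(x_n)$ with $d(f(x_n),x_{n+1})<\delta$ for consecutive indices; $x$ $\varepsilon$-shadows it if $d(f^n(x),x_n)<\varepsilon$ for all indices. Finite shadowing property: for every $\varepsilon>0$ there is $\delta>0$ such that every finite $\delta$-pseudo-orbit is $\varepsilon$-shadowed by some point; shadowing property: same with infinite pseudo-orbits. *)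

theory Defs
  imports "HOL-Analysis.Analysis"
begin

definition finite_shadowing :: "'a::metric_space set \<Rightarrow> ('a \<Rightarrow> 'a) \<Rightarrow> bool" where
  "finite_shadowing S f \<longleftrightarrow>
     (\<forall>\<epsilon>>0. \<exists>\<delta>>0. \<forall>(n::nat) (x::nat \<Rightarrow> 'a).
        (\<forall>i\<le>n. x i \<in> S) \<and> (\<forall>i<n. dist (f (x i)) (x (Suc i)) < \<delta>) \<longrightarrow>
        (\<exists>y\<in>S. \<forall>i\<le>n. dist ((f ^^ i) y) (x i) < \<epsilon>))"

definition shadowing :: "'a::metric_space set \<Rightarrow> ('a \<Rightarrow> 'a) \<Rightarrow> bool" where
  "shadowing S f \<longleftrightarrow>
     (\<forall>\<epsilon>>0. \<exists>\<delta>>0. \<forall>x::nat \<Rightarrow> 'a.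
        (\<forall>i. x i \<in> S) \<and> (\<forall>i. dist (f (x i)) (x (Suc i)) < \<delta>) \<longrightarrow>
        (\<exists>y\<in>S. \<forall>i. dist ((f ^^ i) y) (x i) < \<epsilon>))"

end

theory Submission
  imports Defs
begin

lemma iter_e:
  assumes "f ` X \<subseteq> X" "\<forall>x\<in>X. g (e x) = e (f x)" "z \<in> X"
  shows "(f ^^ i) z \<in> X \<and> (g ^^ i) (e z) = e ((f ^^ i) z)"
  using assms by (induction i) auto

lemma choose_approx:
  assumes "\<forall>i. y i \<in> closure (e ` X)" "r > 0"
  shows "\<exists>x. \<forall>i. x i \<in> X \<and> dist (y i) (e (x i)) < r"
proof -
  have "\<forall>i. \<exists>x. x \<in> X \<and> dist (y i) (e x) < r"
  proof
    fix i
    from assms(1) have "y i \<in> closure (e ` X)" by blast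
    then obtain z where "z \<in> e ` X" "dist z (y i) < r"
      using assms(2) closure_approachable by metis
    then show "\<exists>x. x \<in> X \<and> dist (y i) (e x) < r" by (auto simp: dist_commute)
  qed
  then show ?thesis by metis
qed

lemma choose_approx_fin:
  assumes "\<forall>i\<le>n. y i \<in> closure (e ` X)" "r > 0"
  shows "\<exists>x. \<forall>i\<le>n. x i \<in> X \<and> dist (y i) (e (x i)) < r"
proof -
  have "\<forall>i. \<exists>x. i \<le> n \<longrightarrow> x \<in> X \<and> dist (y i) (e x) < r"
  proof
    fix i
    show "\<exists>x. i \<le> n \<longrightarrow> x \<in> X \<and> dist (y i) (e x) < r"
    proof (cases "i \<le> n")
      case True
      with assms(1) have "y i \<in> closure (e ` X)" by blast
      then obtain z where "z \<in> e ` X" "dist z (y i) < r"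
        using assms(2) closure_approachable by metis
      then show ?thesis by (auto simp: dist_commute)
    qed auto
  qed
  then show ?thesis by metis
qed

lemma step_est:
  assumes e_iso: "\<forall>x\<in>X. \<forall>y\<in>X. dist (e x) (e y) = dist x y"
    and f_maps: "f ` X \<subseteq> X"
    and g_ext: "\<forall>x\<in>X. g (e x) = e (f x)"
    and gr: "\<forall>a\<in>closure (e ` X). \<forall>b\<in>closure (e ` X). dist a b < r \<longrightarrow> dist (g a) (g b) < d/3"
    and r: "r \<le> d/3"
    and a: "a \<in> closure (e ` X)" and x: "x \<in> X" and ax: "dist a (e x) < r"
    and b: "dist (g a) b < d/3" and x': "x' \<in> X" and bx: "dist b (e x') < r"
  shows "dist (f x) x' < d"
proof -
  have ex: "e x \<in> closure (e ` X)" using x closure_subset by blast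
  have "dist (f x) x' = dist (e (f x)) (e x')" using e_iso x x' f_maps by auto
  also have "\<dots> = dist (g (e x)) (e x')" using g_ext x by simp
  also have "\<dots> \<le> dist (g (e x)) (g a) + dist (g a) b + dist b (e x')"
    by (metis dist_triangle add.commute add_le_cancel_left order_trans)
  also have "dist (g (e x)) (g a) < d/3" using gr ex a ax by (simp add: dist_commute)
  finally show ?thesis using b bx r by linarith
qed

lemma final_est:
  assumes e_iso: "\<forall>x\<in>X. \<forall>y\<in>X. dist (e x) (e y) = dist x y"
    and "u \<in> X" "x \<in> X" "dist u x < \<epsilon>/2" "dist y (e x) < r" "r \<le> \<epsilon>/2"
  shows "dist (e u) y < \<epsilon>"
proof -
  have "dist (e u) y \<le> dist (e u) (e x) + dist y (e x)" by (rule dist_triangle2)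
  then show ?thesis using assms by auto
qed

theorem theorem2p7:
  fixes X :: "'a::metric_space set" and f :: "'a \<Rightarrow> 'a"
    and e :: "'a \<Rightarrow> 'b::complete_space" and g :: "'b \<Rightarrow> 'b"
  assumes sep: "separable_space (subtopology euclidean X)"
    and f_maps: "f ` X \<subseteq> X"
    and f_uc: "uniformly_continuous_on X f"
    and e_iso: "\<forall>x\<in>X. \<forall>y\<in>X. dist (e x) (e y) = dist x y"
    and g_maps: "g ` closure (e ` X) \<subseteq> closure (e ` X)"
    and g_uc: "uniformly_continuous_on (closure (e ` X)) g"
    and g_ext: "\<forall>x\<in>X. g (e x) = e (f x)"
  shows "(shadowing X f \<longrightarrow> shadowing (closure (e ` X)) g) \<and>
         (finite_shadowing X f \<longrightarrow> finite_shadowing (closure (e ` X)) g)"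
proof -
  let ?Y = "closure (e ` X)"
  have R: "\<exists>r>0. r \<le> \<epsilon>/2 \<and> r \<le> d/3 \<and>
     (\<forall>a\<in>?Y. \<forall>b\<in>?Y. dist a b < r \<longrightarrow> dist (g a) (g b) < d/3)"
    if "\<epsilon> > 0" "d > 0" for \<epsilon> d :: real
  proof -
    obtain \<eta> where "\<eta> > 0" and h: "\<forall>a\<in>?Y. \<forall>b\<in>?Y. dist b a < \<eta> \<longrightarrow> dist (g b) (g a) < d/3"
      using g_uc \<open>d > 0\<close> unfolding uniformly_continuous_on_def
      by (metis divide_pos_pos zero_less_numeral)
    show ?thesis
      apply (rule exI[of _ "min \<eta> (min (\<epsilon>/2) (d/3))"])
      using \<open>\<eta> > 0\<close> that h by auto
  qed
  have A: "shadowing ?Y g" if sh: "shadowing X f"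
    unfolding shadowing_def
  proof (intro allI impI)
    fix \<epsilon> :: real assume "\<epsilon> > 0"
    then obtain d where "d > 0" and dd: "\<forall>x. (\<forall>i. x i \<in> X) \<and> (\<forall>i. dist (f (x i)) (x (Suc i)) < d) \<longrightarrow>
        (\<exists>y\<in>X. \<forall>i. dist ((f ^^ i) y) (x i) < \<epsilon>/2)"
      using sh unfolding shadowing_def by (metis half_gt_zero)
    obtain r where r: "r > 0" "r \<le> \<epsilon>/2" "r \<le> d/3"
      and gr: "\<forall>a\<in>?Y. \<forall>b\<in>?Y. dist a b < r \<longrightarrow> dist (g a) (g b) < d/3"
      using R[OF \<open>\<epsilon> > 0\<close> \<open>d > 0\<close>] by blast
    show "\<exists>\<delta>>0. \<forall>x. (\<forall>i. x i \<in> ?Y) \<and> (\<forall>i. dist (g (x i)) (x (Suc i)) < \<delta>) \<longrightarrow>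
        (\<exists>y\<in>?Y. \<forall>i. dist ((g ^^ i) y) (x i) < \<epsilon>)"
    proof (intro exI[of _ "d/3"] conjI allI impI)
      show "d/3 > 0" using \<open>d > 0\<close> by simp
      fix y assume yy: "(\<forall>i. y i \<in> ?Y) \<and> (\<forall>i. dist (g (y i)) (y (Suc i)) < d/3)"
      then obtain x where x: "\<forall>i. x i \<in> X \<and> dist (y i) (e (x i)) < r"
        using choose_approx[of y e X r] r by blast
      have "\<forall>i. dist (f (x i)) (x (Suc i)) < d"
        using step_est[OF e_iso f_maps g_ext gr r(3)] yy x by blast
      then obtain u where u: "u \<in> X" "\<forall>i. dist ((f ^^ i) u) (x i) < \<epsilon>/2"
        using dd x by blast
      show "\<exists>z\<in>?Y. \<forall>i. dist ((g ^^ i) z) (y i) < \<epsilon>"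
      proof (intro bexI[of _ "e u"] allI)
        show "e u \<in> ?Y" using u closure_subset by blast
        fix i
        show "dist ((g ^^ i) (e u)) (y i) < \<epsilon>"
          using iter_e[OF f_maps g_ext u(1), of i] final_est[OF e_iso, of "(f ^^ i) u" "x i" \<epsilon> "y i" r]
            u x r by auto
      qed
    qed
  qed
  have B: "finite_shadowing ?Y g" if sh: "finite_shadowing X f"
    unfolding finite_shadowing_def
  proof (intro allI impI)
    fix \<epsilon> :: real assume "\<epsilon> > 0"
    then obtain d where "d > 0" and dd: "\<forall>(n::nat) x. (\<forall>i\<le>n. x i \<in> X) \<and> (\<forall>i<n. dist (f (x i)) (x (Suc i)) < d) \<longrightarrow>
        (\<exists>y\<in>X. \<forall>i\<le>n. dist ((f ^^ i) y) (x i) < \<epsilon>/2)"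
      using sh unfolding finite_shadowing_def by (metis half_gt_zero)
    obtain r where r: "r > 0" "r \<le> \<epsilon>/2" "r \<le> d/3"
      and gr: "\<forall>a\<in>?Y. \<forall>b\<in>?Y. dist a b < r \<longrightarrow> dist (g a) (g b) < d/3"
      using R[OF \<open>\<epsilon> > 0\<close> \<open>d > 0\<close>] by blast
    show "\<exists>\<delta>>0. \<forall>(n::nat) x. (\<forall>i\<le>n. x i \<in> ?Y) \<and> (\<forall>i<n. dist (g (x i)) (x (Suc i)) < \<delta>) \<longrightarrow>
        (\<exists>y\<in>?Y. \<forall>i\<le>n. dist ((g ^^ i) y) (x i) < \<epsilon>)"
    proof (intro exI[of _ "d/3"] conjI allI impI)
      show "d/3 > 0" using \<open>d > 0\<close> by simp
      fix n :: nat and y assume yy: "(\<forall>i\<le>n. y i \<in> ?Y) \<and> (\<forall>i<n. dist (g (y i)) (y (Suc i)) < d/3)"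
      then obtain x where x: "\<forall>i\<le>n. x i \<in> X \<and> dist (y i) (e (x i)) < r"
        using choose_approx_fin[of n y e X r] r by blast
      have "\<forall>i<n. dist (f (x i)) (x (Suc i)) < d"
      proof (intro allI impI)
        fix i assume "i < n"
        then show "dist (f (x i)) (x (Suc i)) < d"
          using step_est[OF e_iso f_maps g_ext gr r(3), of "y i" "x i" "y (Suc i)" "x (Suc i)"] yy x
          by auto
      qed
      then obtain u where u: "u \<in> X" "\<forall>i\<le>n. dist ((f ^^ i) u) (x i) < \<epsilon>/2"
        using dd x by blast
      show "\<exists>z\<in>?Y. \<forall>i\<le>n. dist ((g ^^ i) z) (y i) < \<epsilon>"
      proof (intro bexI[of _ "e u"] allI impI)
        show "e u \<in> ?Y" using u closure_subset by blast
        fix i assume "i \<le> n"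
        then show "dist ((g ^^ i) (e u)) (y i) < \<epsilon>"
          using iter_e[OF f_maps g_ext u(1), of i] final_est[OF e_iso, of "(f ^^ i) u" "x i" \<epsilon> "y i" r]
            u x r by auto
      qed
    qed
  qed
  show ?thesis using A B by blast
qed

end
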